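(* If $\phi$ is dinatural in its $k$-th variable and $\psi$ is dinatural in its $i$-th variable, then the $i$-th horizontal composite $\phi\ast_i\psi$ is dinatural in its $(i-1+k)$-th variable (the variable $A_k$).
   Context: Notation: $k$ also denotes $\{1,\dots,k\}$; $\mathbb C^\alpha=\mathbb C^{\alpha_1}\times\cdots$ with $\mathbb C^+=\mathbb C$, $\mathbb C^-=\mathbb C^{op}$; for $\mathbf A=(A_1,\dots,A_n)$, $\sigma\colon k\to n$, $\mathbf A\sigma=(A_{\sigma1},\dots,A_{\sigma k})$; a morphism in a contravariant argument is read in $\mathbb C^{op}$. A transformation $\phi\colon F\to G$ ($F\colon\mathbb C^\alpha\to\mathbb C$, $G\colon\mathbb C^\beta\to\mathbb C$) of type $|\alpha|\xrightarrow{\sigma}n\xleftarrow{\tau}|\beta|$ is a family $\phi_{\mathbf A}\colon F(\mathbf A\sigma)\to G(\mathbf A\tau)$, $\mathbf A\in\mathrm{Ob}(\mathbb C)^n$. $\mathbf A[X,Y/i]\sigma$ is the tuple whose $j$-th entry is $X$ if $\sigma j=i,\alpha_j=-$, $Y$ if $\sigma j=i,\alpha_j=+$, $A_{\sigma j}$ (or $1_{A_{\sigma j}}$ for morphisms) otherwise; $\mathbf A[X/i]=\mathbf A[X,X/i]$. $\phi$ is dinatural in its $i$-th variable if for all $A_j$ ($j\ne i$) and $f\colon A\to B$: $G(\mathbf A[A,f/i]\tau)\circ\phi_{\mathbf A[A/i]}\circ F(\mathbf A[f,A/i]\sigma)=G(\mathbf A[f,B/i]\tau)\circ\phi_{\mathbf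 A[B/i]}\circ F(\mathbf A[B,f/i]\sigma)$. Horizontal composition: let $F\colon\mathbb C^\alpha\to\mathbb C$, $G\colon\mathbb C^\beta\to\mathbb C$, $H\colon\mathbb C^\gamma\to\mathbb C$, $K\colon\mathbb C^\delta\to\mathbb C$, $\phi\colon F\to G$ of type $|\alpha|\xrightarrow{\sigma}n\xleftarrow{\tau}|\beta|$ with variables $\mathbf A=(A_1,\dots,A_n)$, and $\psi\colon H\to K$ of type $|\gamma|\xrightarrow{\eta}m\xleftarrow{\theta}|\delta|$ with variables $\mathbf B=(B_1,\dots,B_m)$, dinatural in its $i$-th variable. The $i$-th horizontal composite $\phi\ast_i\psi$ is the transformation with variables $\mathbf B[\mathbf A/i]=(B_1,\dots,B_{i-1},A_1,\dots,A_n,B_{i+1},\dots,B_m)$ (so $A_k$ is its $(i-1+k)$-th variable). Its domain functor is obtained from $H$ by substituting, into each argument position $u$ with $\eta u=i$, the functor $F$ if $\gamma_u=+$ and $G^{op}$ if $\gamma_u=-$ (other positions unchanged); its codomain functor is obtained from $K$ by substituting, into each position $v$ with $\theta v=i$, $G$ if $\delta_v=+$ and $F^{op}$ if $\delta_v=-$. In its type, an argument coming from the $j$-th argument of a copy of $F$ is assigned variable $A_{\sigma j}$, one coming from the $j$-th argument of a copy of $G$ variable $A_{\tau j}$, and an unchanged position $u$ of $H$ (resp. $v$ of $K$) variable $B_{\eta u}$ (resp. $B_{\theta v}$). Its component at $\mathbf B[\mathbf A/i]$ is the morphism $H(\mathbf B[G(\mathbf A\tau),F(\mathbf A\sigma)/i]\eta)\to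 K(\mathbf B[F(\mathbf A\sigma),G(\mathbf A\tau)/i]\theta)$ given by $K(\mathbf B[F(\mathbf A\sigma),\phi_{\mathbf A}/i]\theta)\circ\psi_{\mathbf B[F(\mathbf A\sigma)/i]}\circ H(\mathbf B[\phi_{\mathbf A},F(\mathbf A\sigma)/i]\eta)$, equal to $K(\mathbf B[\phi_{\mathbf A},G(\mathbf A\tau)/i]\theta)\circ\psi_{\mathbf B[G(\mathbf A\tau)/i]}\circ H(\mathbf B[G(\mathbf A\tau),\phi_{\mathbf A}/i]\eta)$ by dinaturality of $\psi$. *)

theory Defs
  imports Main
begin

text \<open>A category: a set of objects, a set of arrows, domain, codomain,
identities, and composition (Comp g f = g after f).\<close>

record ('o, 'a) cat =
  Obj  :: "'o set"
  Arr  :: "'a set"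
  Dom  :: "'a \<Rightarrow> 'o"
  Cod  :: "'a \<Rightarrow> 'o"
  Id   :: "'o \<Rightarrow> 'a"
  Comp :: "'a \<Rightarrow> 'a \<Rightarrow> 'a"

definition category :: "('o, 'a) cat \<Rightarrow> bool" where
  "category C \<longleftrightarrow>
     (\<forall>f \<in> Arr C. Dom C f \<in> Obj C \<and> Cod C f \<in> Obj C) \<and>
     (\<forall>a \<in> Obj C. Id C a \<in> Arr C \<and> Dom C (Id C a) = a \<and> Cod C (Id C a) = a) \<and>
     (\<forall>f \<in> Arr C. \<forall>g \<in> Arr C. Cod C f = Dom C g \<longrightarrow>
        Comp C g f \<in> Arr C \<and> Dom C (Comp C g f) = Dom C f \<and> Cod C (Comp C g f) = Cod C g) \<and>
     (\<forall>f \<in> Arr C. \<forall>g \<in> Arr C. \<forall>h \<in> Arr C. Cod C f = Dom C g \<longrightarrow> Cod C g = Dom C h \<longrightarrow>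
        Comp C h (Comp C g f) = Comp C (Comp C h g) f) \<and>
     (\<forall>f \<in> Arr C. Comp C f (Id C (Dom C f)) = f \<and> Comp C (Id C (Cod C f)) f = f)"

section \<open>Functors of mixed variance  C^alpha \<rightarrow> C\<close>

text \<open>A variance list alpha :: bool list, True = + (covariant), False = - (contravariant).  An arrow in a
contravariant argument is read in C^op, i.e. it is an arrow of C in the reverse direction.\<close>

record ('o, 'a) mvfun =
  fobj :: "'o list \<Rightarrow> 'o"
  farr :: "'a list \<Rightarrow> 'a"

definition src_tuple :: "('o, 'a) cat \<Rightarrow> bool list \<Rightarrow> 'a list \<Rightarrow> 'o list" where
  "src_tuple C \<alpha> fs = map (\<lambda>j. if \<alpha> ! j then Dom C (fs ! j) else Cod C (fs ! j)) [0..<length \<alpha>]"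

definition tgt_tuple :: "('o, 'a) cat \<Rightarrow> bool list \<Rightarrow> 'a list \<Rightarrow> 'o list" where
  "tgt_tuple C \<alpha> fs = map (\<lambda>j. if \<alpha> ! j then Cod C (fs ! j) else Dom C (fs ! j)) [0..<length \<alpha>]"

definition mvfunctor :: "('o, 'a) cat \<Rightarrow> bool list \<Rightarrow> ('o, 'a) mvfun \<Rightarrow> bool" where
  "mvfunctor C \<alpha> F \<longleftrightarrow>
     (\<forall>As. length As = length \<alpha> \<longrightarrow> set As \<subseteq> Obj C \<longrightarrow> fobj F As \<in> Obj C) \<and>
     (\<forall>fs. length fs = length \<alpha> \<longrightarrow> set fs \<subseteq> Arr C \<longrightarrow>
        farr F fs \<in> Arr C \<and> Dom C (farr F fs) = fobj F (src_tuple C \<alpha> fs)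
                         \<and> Cod C (farr F fs) = fobj F (tgt_tuple C \<alpha> fs)) \<and>
     (\<forall>As. length As = length \<alpha> \<longrightarrow> set As \<subseteq> Obj C \<longrightarrow>
        farr F (map (Id C) As) = Id C (fobj F As)) \<and>
     (\<forall>fs gs. length fs = length \<alpha> \<longrightarrow> length gs = length \<alpha> \<longrightarrow>
        set fs \<subseteq> Arr C \<longrightarrow> set gs \<subseteq> Arr C \<longrightarrow> tgt_tuple C \<alpha> fs = src_tuple C \<alpha> gs \<longrightarrow>
        farr F (map (\<lambda>j. if \<alpha> ! j then Comp C (gs ! j) (fs ! j) else Comp C (fs ! j) (gs ! j))
                    [0..<length \<alpha>])
        = Comp C (farr F gs) (farr F fs))"

section \<open>Transformations and dinaturality\<close>

text \<open>Indices are 0-based: the variables are A_0, ..., A_(n-1).  A type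
|alpha| --sigma--> n <--tau-- |beta| is represented by lists sigma, tau of
variable indices; the tuple A sigma is  map ((!) A) sigma.\<close>

definition transformation ::
  "('o, 'a) cat \<Rightarrow> ('o, 'a) mvfun \<Rightarrow> bool list \<Rightarrow> ('o, 'a) mvfun \<Rightarrow> bool list \<Rightarrow>
   nat list \<Rightarrow> nat list \<Rightarrow> nat \<Rightarrow> ('o list \<Rightarrow> 'a) \<Rightarrow> bool" where
  "transformation C F \<alpha> G \<beta> \<sigma> \<tau> n \<phi> \<longleftrightarrow>
     length \<sigma> = length \<alpha> \<and> length \<tau> = length \<beta> \<and>
     (\<forall>j \<in> set \<sigma>. j < n) \<and> (\<forall>j \<in> set \<tau>. j < n) \<and>
     (\<forall>A. length A = n \<longrightarrow> set A \<subseteq> Obj C \<longrightarrow>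
        \<phi> A \<in> Arr C \<and> Dom C (\<phi> A) = fobj F (map ((!) A) \<sigma>)
                   \<and> Cod C (\<phi> A) = fobj G (map ((!) A) \<tau>))"

text \<open>The arrow tuple  A[X,Y/i]sigma  (X at contravariant, Y at covariant
occurrences of variable i, identities elsewhere).\<close>

definition arr_subst ::
  "('o, 'a) cat \<Rightarrow> 'o list \<Rightarrow> 'a \<Rightarrow> 'a \<Rightarrow> nat \<Rightarrow> nat list \<Rightarrow> bool list \<Rightarrow> 'a list" where
  "arr_subst C A X Y i \<sigma> \<alpha> =
     map (\<lambda>j. if \<sigma> ! j = i then (if \<alpha> ! j then Y else X) else Id C (A ! (\<sigma> ! j)))
         [0..<length \<alpha>]"

definition dinatural ::
  "('o, 'a) cat \<Rightarrow> ('o, 'a) mvfun \<Rightarrow> bool list \<Rightarrow> nat list \<Rightarrow>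
   ('o, 'a) mvfun \<Rightarrow> bool list \<Rightarrow> nat list \<Rightarrow> nat \<Rightarrow> ('o list \<Rightarrow> 'a) \<Rightarrow> nat \<Rightarrow> bool" where
  "dinatural C F \<alpha> \<sigma> G \<beta> \<tau> n \<phi> i \<longleftrightarrow> i < n \<and>
     (\<forall>A f. length A = n \<longrightarrow> set A \<subseteq> Obj C \<longrightarrow> f \<in> Arr C \<longrightarrow>
        (let a = Dom C f; b = Cod C f in
          Comp C (farr G (arr_subst C A (Id C a) f i \<tau> \<beta>))
            (Comp C (\<phi> (A[i := a])) (farr F (arr_subst C A f (Id C a) i \<sigma> \<alpha>)))
          = Comp C (farr G (arr_subst C A f (Id C b) i \<tau> \<beta>))
            (Comp C (\<phi> (A[i := b])) (farr F (arr_subst C A (Id C b) f i \<sigma> \<alpha>)))))"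

section \<open>Horizontal composition\<close>

text \<open>Variables of the composite: B[A/i] = B_0..B_(i-1), A_0..A_(n-1), B_(i+1)..B_(m-1);
so A_k is variable i+k, and B_b (b \<noteq> i) is variable vshift n i b.\<close>

definition vshift :: "nat \<Rightarrow> nat \<Rightarrow> nat \<Rightarrow> nat" where
  "vshift n i b = (if b < i then b else b + n - 1)"

definition plug :: "nat list \<Rightarrow> (nat \<Rightarrow> 'x list \<Rightarrow> 'x) \<Rightarrow> 'x list \<Rightarrow> 'x list" where
  "plug ws g xs = map (\<lambda>u. g u (take (ws ! u) (drop (sum_list (take u ws)) xs))) [0..<length ws]"

text \<open>Domain functor: in H substitute F at covariant, G^op at contravariant positions u with eta u = i.\<close>

definition hc_dom_widths :: "bool list \<Rightarrow> bool list \<Rightarrow> bool list \<Rightarrow> nat list \<Rightarrow> nat \<Rightarrow> nat list" where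
  "hc_dom_widths \<alpha> \<beta> \<gamma> \<eta> i =
     map (\<lambda>u. if \<eta> ! u = i then (if \<gamma> ! u then length \<alpha> else length \<beta>) else 1) [0..<length \<gamma>]"

definition hc_dom_var :: "bool list \<Rightarrow> bool list \<Rightarrow> bool list \<Rightarrow> nat list \<Rightarrow> nat \<Rightarrow> bool list" where
  "hc_dom_var \<alpha> \<beta> \<gamma> \<eta> i =
     concat (map (\<lambda>u. if \<eta> ! u = i then (if \<gamma> ! u then \<alpha> else map Not \<beta>) else [\<gamma> ! u])
                 [0..<length \<gamma>])"

definition hc_dom_type ::
  "nat list \<Rightarrow> nat list \<Rightarrow> nat \<Rightarrow> bool list \<Rightarrow> nat list \<Rightarrow> nat \<Rightarrow> nat list" where
  "hc_dom_type \<sigma> \<tau> n \<gamma> \<eta> i =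
     concat (map (\<lambda>u. if \<eta> ! u = i then (if \<gamma> ! u then map ((+) i) \<sigma> else map ((+) i) \<tau>)
                      else [vshift n i (\<eta> ! u)])
                 [0..<length \<gamma>])"

definition hc_dom ::
  "bool list \<Rightarrow> bool list \<Rightarrow> bool list \<Rightarrow> nat list \<Rightarrow> nat \<Rightarrow>
   ('o, 'a) mvfun \<Rightarrow> ('o, 'a) mvfun \<Rightarrow> ('o, 'a) mvfun \<Rightarrow> ('o, 'a) mvfun" where
  "hc_dom \<alpha> \<beta> \<gamma> \<eta> i F G H =
     \<lparr> fobj = (\<lambda>Xs. fobj H (plug (hc_dom_widths \<alpha> \<beta> \<gamma> \<eta> i)
                (\<lambda>u ys. if \<eta> ! u = i then (if \<gamma> ! u then fobj F ys else fobj G ys) else hd ys) Xs)),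
       farr = (\<lambda>fs. farr H (plug (hc_dom_widths \<alpha> \<beta> \<gamma> \<eta> i)
                (\<lambda>u ys. if \<eta> ! u = i then (if \<gamma> ! u then farr F ys else farr G ys) else hd ys) fs)) \<rparr>"

text \<open>Codomain functor: in K substitute G at covariant, F^op at contravariant positions v with theta v = i.\<close>

definition hc_cod_widths :: "bool list \<Rightarrow> bool list \<Rightarrow> bool list \<Rightarrow> nat list \<Rightarrow> nat \<Rightarrow> nat list" where
  "hc_cod_widths \<alpha> \<beta> \<delta> \<theta> i =
     map (\<lambda>v. if \<theta> ! v = i then (if \<delta> ! v then length \<beta> else length \<alpha>) else 1) [0..<length \<delta>]"

definition hc_cod_var :: "bool list \<Rightarrow> bool list \<Rightarrow> bool list \<Rightarrow> nat list \<Rightarrow> nat \<Rightarrow> bool list" where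
  "hc_cod_var \<alpha> \<beta> \<delta> \<theta> i =
     concat (map (\<lambda>v. if \<theta> ! v = i then (if \<delta> ! v then \<beta> else map Not \<alpha>) else [\<delta> ! v])
                 [0..<length \<delta>])"

definition hc_cod_type ::
  "nat list \<Rightarrow> nat list \<Rightarrow> nat \<Rightarrow> bool list \<Rightarrow> nat list \<Rightarrow> nat \<Rightarrow> nat list" where
  "hc_cod_type \<sigma> \<tau> n \<delta> \<theta> i =
     concat (map (\<lambda>v. if \<theta> ! v = i then (if \<delta> ! v then map ((+) i) \<tau> else map ((+) i) \<sigma>)
                      else [vshift n i (\<theta> ! v)])
                 [0..<length \<delta>])"

definition hc_cod ::
  "bool list \<Rightarrow> bool list \<Rightarrow> bool list \<Rightarrow> nat list \<Rightarrow> nat \<Rightarrow>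
   ('o, 'a) mvfun \<Rightarrow> ('o, 'a) mvfun \<Rightarrow> ('o, 'a) mvfun \<Rightarrow> ('o, 'a) mvfun" where
  "hc_cod \<alpha> \<beta> \<delta> \<theta> i F G K =
     \<lparr> fobj = (\<lambda>Xs. fobj K (plug (hc_cod_widths \<alpha> \<beta> \<delta> \<theta> i)
                (\<lambda>v ys. if \<theta> ! v = i then (if \<delta> ! v then fobj G ys else fobj F ys) else hd ys) Xs)),
       farr = (\<lambda>fs. farr K (plug (hc_cod_widths \<alpha> \<beta> \<delta> \<theta> i)
                (\<lambda>v ys. if \<theta> ! v = i then (if \<delta> ! v then farr G ys else farr F ys) else hd ys) fs)) \<rparr>"

text \<open>Components of the i-th horizontal composite at X = B[A/i]:
 K(B[F(A sigma), phi_A/i]theta) o psi_(B[F(A sigma)/i]) o H(B[phi_A, F(A sigma)/i]eta).\<close>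

definition hc_comp ::
  "('o, 'a) cat \<Rightarrow> nat list \<Rightarrow> nat \<Rightarrow> bool list \<Rightarrow> nat list \<Rightarrow> bool list \<Rightarrow> nat list \<Rightarrow> nat \<Rightarrow>
   ('o, 'a) mvfun \<Rightarrow> ('o, 'a) mvfun \<Rightarrow> ('o, 'a) mvfun \<Rightarrow>
   ('o list \<Rightarrow> 'a) \<Rightarrow> ('o list \<Rightarrow> 'a) \<Rightarrow> 'o list \<Rightarrow> 'a" where
  "hc_comp C \<sigma> n \<gamma> \<eta> \<delta> \<theta> i F H K \<phi> \<psi> X =
     (let A = take n (drop i X);
          FA = fobj F (map ((!) A) \<sigma>);
          B = take i X @ [FA] @ drop (i + n) X
      in Comp C (farr K (arr_subst C B (Id C FA) (\<phi> A) i \<theta> \<delta>))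
           (Comp C (\<psi> B) (farr H (arr_subst C B (\<phi> A) (Id C FA) i \<eta> \<gamma>))))"

end

theory Submission
  imports Defs
begin


lemma length_arr_subst[simp]: "length (arr_subst C A X Y i \<sigma> \<alpha>) = length \<alpha>"
  by (simp add: arr_subst_def)

context fixes C :: "('o,'a) cat" assumes cat: "category C" begin
lemma cdom: "f \<in> Arr C \<Longrightarrow> Dom C f \<in> Obj C" using cat by (auto simp: category_def)
lemma ccod: "f \<in> Arr C \<Longrightarrow> Cod C f \<in> Obj C" using cat by (auto simp: category_def)
lemma cid: "a \<in> Obj C \<Longrightarrow> Id C a \<in> Arr C" "a \<in> Obj C \<Longrightarrow> Dom C (Id C a) = a" "a \<in> Obj C \<Longrightarrow> Cod C (Id C a) = a"
  using cat by (auto simp: category_def)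
lemma ccomp: "f \<in> Arr C \<Longrightarrow> g \<in> Arr C \<Longrightarrow> Cod C f = Dom C g \<Longrightarrow> Comp C g f \<in> Arr C"
   "f \<in> Arr C \<Longrightarrow> g \<in> Arr C \<Longrightarrow> Cod C f = Dom C g \<Longrightarrow> Dom C (Comp C g f) = Dom C f"
   "f \<in> Arr C \<Longrightarrow> g \<in> Arr C \<Longrightarrow> Cod C f = Dom C g \<Longrightarrow> Cod C (Comp C g f) = Cod C g"
  using cat by (auto simp: category_def)
lemma cassoc: "f \<in> Arr C \<Longrightarrow> g \<in> Arr C \<Longrightarrow> h \<in> Arr C \<Longrightarrow> Cod C f = Dom C g \<Longrightarrow> Cod C g = Dom C h \<Longrightarrow>
   Comp C h (Comp C g f) = Comp C (Comp C h g) f"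
  using cat unfolding category_def by blast
lemma cidl: "f \<in> Arr C \<Longrightarrow> Comp C (Id C (Cod C f)) f = f" using cat by (auto simp: category_def)
lemma cidr: "f \<in> Arr C \<Longrightarrow> Comp C f (Id C (Dom C f)) = f" using cat by (auto simp: category_def)
lemma cidid: "a \<in> Obj C \<Longrightarrow> Comp C (Id C a) (Id C a) = Id C a"
  using cidl[of "Id C a"] cid[of a] by simp
end

lemma mv_comp:
  assumes "mvfunctor C \<alpha> F" "length fs = length \<alpha>" "length gs = length \<alpha>"
    "set fs \<subseteq> Arr C" "set gs \<subseteq> Arr C" "tgt_tuple C \<alpha> fs = src_tuple C \<alpha> gs"
  shows "farr F (map (\<lambda>j. if \<alpha> ! j then Comp C (gs ! j) (fs ! j) else Comp C (fs ! j) (gs ! j))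
                    [0..<length \<alpha>]) = Comp C (farr F gs) (farr F fs)"
  using assms unfolding mvfunctor_def by blast

lemma sub_arr:
  assumes "category C" "x \<in> Arr C" "y \<in> Arr C" "set B \<subseteq> Obj C" "\<forall>j\<in>set \<eta>. j < length B" "length \<eta> = length \<gamma>"
  shows "set (arr_subst C B x y i \<eta> \<gamma>) \<subseteq> Arr C"
  using assms cid(1)[OF assms(1)] by (auto simp: arr_subst_def) (metis nth_mem subsetD)

lemma sub_src:
  assumes "category C" "set B \<subseteq> Obj C" "\<forall>j\<in>set \<eta>. j < length B" "length \<eta> = length \<gamma>"
  shows "src_tuple C \<gamma> (arr_subst C B x y i \<eta> \<gamma>) =
     map (\<lambda>j. if \<eta>!j = i then (if \<gamma>!j then Dom C y else Cod C x) else B!(\<eta>!j)) [0..<length \<gamma>]"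
  using assms cid[OF assms(1)] by (auto simp: arr_subst_def src_tuple_def intro!: nth_equalityI) (metis nth_mem subsetD)+

lemma sub_tgt:
  assumes "category C" "set B \<subseteq> Obj C" "\<forall>j\<in>set \<eta>. j < length B" "length \<eta> = length \<gamma>"
  shows "tgt_tuple C \<gamma> (arr_subst C B x y i \<eta> \<gamma>) =
     map (\<lambda>j. if \<eta>!j = i then (if \<gamma>!j then Cod C y else Dom C x) else B!(\<eta>!j)) [0..<length \<gamma>]"
  using assms cid[OF assms(1)] by (auto simp: arr_subst_def tgt_tuple_def intro!: nth_equalityI) (metis nth_mem subsetD)+

lemma map_upd_eq:
  "length \<eta> = length \<gamma> \<Longrightarrow> \<forall>j\<in>set \<eta>. j < length B \<Longrightarrow>
   map ((!) (B[i:=c])) \<eta> = map (\<lambda>j. if \<eta>!j = i then c else B!(\<eta>!j)) [0..<length \<gamma>]"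
  by (auto intro!: nth_equalityI simp: nth_list_update)

lemma sub_farr:
  assumes "category C" "mvfunctor C \<gamma> H" "x \<in> Arr C" "y \<in> Arr C" "set B \<subseteq> Obj C" "\<forall>j\<in>set \<eta>. j < length B" "length \<eta> = length \<gamma>"
  shows "farr H (arr_subst C B x y i \<eta> \<gamma>) \<in> Arr C"
    "Dom C (farr H (arr_subst C B x y i \<eta> \<gamma>)) = fobj H (map (\<lambda>j. if \<eta>!j = i then (if \<gamma>!j then Dom C y else Cod C x) else B!(\<eta>!j)) [0..<length \<gamma>])"
    "Cod C (farr H (arr_subst C B x y i \<eta> \<gamma>)) = fobj H (map (\<lambda>j. if \<eta>!j = i then (if \<gamma>!j then Cod C y else Dom C x) else B!(\<eta>!j)) [0..<length \<gamma>])"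
  using assms(2) sub_arr[OF assms(1,3-7), of i] sub_src[OF assms(1,5-7)] sub_tgt[OF assms(1,5-7)]
  unfolding mvfunctor_def by auto

lemma sub_comp:
  assumes "category C" "mvfunctor C \<gamma> H" "x1 \<in> Arr C" "y1 \<in> Arr C" "x2 \<in> Arr C" "y2 \<in> Arr C"
    "set B \<subseteq> Obj C" "\<forall>j\<in>set \<eta>. j < length B" "length \<eta> = length \<gamma>"
    "Cod C y2 = Dom C y1" "Cod C x1 = Dom C x2"
  shows "Comp C (farr H (arr_subst C B x1 y1 i \<eta> \<gamma>)) (farr H (arr_subst C B x2 y2 i \<eta> \<gamma>))
       = farr H (arr_subst C B (Comp C x2 x1) (Comp C y1 y2) i \<eta> \<gamma>)"
proof -
  let ?gs = "arr_subst C B x1 y1 i \<eta> \<gamma>" and ?fs = "arr_subst C B x2 y2 i \<eta> \<gamma>"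
  have t: "tgt_tuple C \<gamma> ?fs = src_tuple C \<gamma> ?gs"
    using sub_src[OF assms(1,7-9)] sub_tgt[OF assms(1,7-9)] assms(10,11) by simp
  have e: "map (\<lambda>j. if \<gamma> ! j then Comp C (?gs ! j) (?fs ! j) else Comp C (?fs ! j) (?gs ! j)) [0..<length \<gamma>]
      = arr_subst C B (Comp C x2 x1) (Comp C y1 y2) i \<eta> \<gamma>"
  proof (rule nth_equalityI)
    fix j assume "j < length (map (\<lambda>j. if \<gamma> ! j then Comp C (?gs ! j) (?fs ! j) else Comp C (?fs ! j) (?gs ! j)) [0..<length \<gamma>])"
    then have j: "j < length \<gamma>" by simp
    then have "B ! (\<eta> ! j) \<in> Obj C" using assms(7-9) by (metis nth_mem subsetD)
    then show "map (\<lambda>j. if \<gamma> ! j then Comp C (?gs ! j) (?fs ! j) else Comp C (?fs ! j) (?gs ! j)) [0..<length \<gamma>] ! j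
          = arr_subst C B (Comp C x2 x1) (Comp C y1 y2) i \<eta> \<gamma> ! j"
      using j cidid[OF assms(1)] by (simp add: arr_subst_def)
  qed simp
  show ?thesis
    using mv_comp[OF assms(2) _ _ sub_arr[OF assms(1,5,6,7-9), of i] sub_arr[OF assms(1,3,4,7-9), of i] t] e
    by simp
qed






lemma drop_concat_len: "drop (sum_list (map length (take u cs))) (concat cs) = concat (drop u cs)"
  by (induction cs arbitrary: u) (auto simp: take_Cons' drop_Cons')

lemma plug_concat:
  assumes "ws = map length cs"
  shows "plug ws g (concat cs) = map (\<lambda>u. g u (cs ! u)) [0..<length cs]"
proof -
  have "take (length (cs ! u)) (drop (sum_list (take u (map length cs))) (concat cs)) = cs ! u"
    if "u < length cs" for u
  proof -
    have "drop u cs = cs!u # drop (Suc u) cs" using that by (rule Cons_nth_drop_Suc[symmetric])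
    then show ?thesis by (simp add: take_map drop_concat_len)
  qed
  then show ?thesis using assms by (auto simp: plug_def)
qed

lemma arr_subst_zip:
  "length \<sigma> = length \<alpha> \<Longrightarrow> arr_subst C A X Y i \<sigma> \<alpha> =
     map (\<lambda>(s,v). if s = i then (if v then Y else X) else Id C (A ! s)) (zip \<sigma> \<alpha>)"
  by (auto simp: arr_subst_def intro!: nth_equalityI)

lemma zip_concat_map:
  "(\<forall>x\<in>set xs. length (f x) = length (g x)) \<Longrightarrow>
   zip (concat (map f xs)) (concat (map g xs)) = concat (map (\<lambda>x. zip (f x) (g x)) xs)"
  by (induction xs) auto

lemma length_concat_map_eq:
  "(\<forall>x\<in>set xs. length (f x) = length (g x)) \<Longrightarrow>
   length (concat (map f xs)) = length (concat (map g xs))"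
  by (induction xs) auto



lemma chunk_shift:
  assumes "length \<sigma> = length \<alpha>" "\<forall>j\<in>set \<sigma>. j < n" "i + n \<le> length X"
  shows "map (\<lambda>(s,v). if s = i + k then (if v then Q else P) else Id C (X ! s)) (zip (map ((+) i) \<sigma>) \<alpha>)
         = arr_subst C (take n (drop i X)) P Q k \<sigma> \<alpha>"
  using assms by (auto simp: arr_subst_def intro!: nth_equalityI)

lemma chunk_shift_not:
  assumes "length \<tau> = length \<beta>" "\<forall>j\<in>set \<tau>. j < n" "i + n \<le> length X"
  shows "map (\<lambda>(s,v). if s = i + k then (if v then Q else P) else Id C (X ! s)) (zip (map ((+) i) \<tau>) (map Not \<beta>))
         = arr_subst C (take n (drop i X)) Q P k \<tau> \<beta>"
  using assms by (auto simp: arr_subst_def intro!: nth_equalityI)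

lemma vshift_ne: "b \<noteq> i \<Longrightarrow> k < n \<Longrightarrow> vshift n i b \<noteq> i + k"
  by (auto simp: vshift_def)

lemma B_nth:
  assumes "b \<noteq> i" "b < m" "length X = m - 1 + n" "i < m"
  shows "(take i X @ [Z] @ drop (i + n) X) ! b = X ! vshift n i b"
proof (cases "b < i")
  case True then show ?thesis using assms by (simp add: nth_append vshift_def)
next
  case False
  then have "b > i" using assms by auto
  then show ?thesis using assms by (simp add: nth_append vshift_def add.commute)
qed

lemma dom_farr:
  assumes "length X = m - 1 + n" "i < m" "k < n" "length \<sigma> = length \<alpha>" "length \<tau> = length \<beta>"
    "\<forall>j\<in>set \<sigma>. j < n" "\<forall>j\<in>set \<tau>. j < n" "\<forall>j\<in>set \<eta>. j < m" "length \<eta> = length \<gamma>"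
  shows "farr (hc_dom \<alpha> \<beta> \<gamma> \<eta> i F G H)
           (arr_subst C X P Q (i+k) (hc_dom_type \<sigma> \<tau> n \<gamma> \<eta> i) (hc_dom_var \<alpha> \<beta> \<gamma> \<eta> i))
   = farr H (arr_subst C (take i X @ [Z] @ drop (i+n) X)
        (farr G (arr_subst C (take n (drop i X)) Q P k \<tau> \<beta>))
        (farr F (arr_subst C (take n (drop i X)) P Q k \<sigma> \<alpha>)) i \<eta> \<gamma>)"
proof -
  define T where "T = (\<lambda>u. if \<eta> ! u = i then (if \<gamma> ! u then map ((+) i) \<sigma> else map ((+) i) \<tau>)
                      else [vshift n i (\<eta> ! u)])"
  define V where "V = (\<lambda>u. if \<eta> ! u = i then (if \<gamma> ! u then \<alpha> else map Not \<beta>) else [\<gamma> ! u])"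
  define q where "q = (\<lambda>(s,v). if s = i + k then (if v then Q else P) else Id C (X ! s))"
  define ch where "ch = (\<lambda>u. if \<eta> ! u = i then (if \<gamma> ! u then arr_subst C (take n (drop i X)) P Q k \<sigma> \<alpha>
                      else arr_subst C (take n (drop i X)) Q P k \<tau> \<beta>) else [Id C (X ! vshift n i (\<eta> ! u))])"
  have TV: "\<forall>u\<in>set [0..<length \<gamma>]. length (T u) = length (V u)"
    using assms by (auto simp: T_def V_def)
  have ty: "hc_dom_type \<sigma> \<tau> n \<gamma> \<eta> i = concat (map T [0..<length \<gamma>])"
    by (simp add: hc_dom_type_def T_def)
  have va: "hc_dom_var \<alpha> \<beta> \<gamma> \<eta> i = concat (map V [0..<length \<gamma>])"
    by (simp add: hc_dom_var_def V_def)
  have len: "length (hc_dom_type \<sigma> \<tau> n \<gamma> \<eta> i) = length (hc_dom_var \<alpha> \<beta> \<gamma> \<eta> i)"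
    unfolding ty va by (rule length_concat_map_eq[OF TV])
  have inl: "i + n \<le> length X" using assms by auto
  have chq: "map q (zip (T u) (V u)) = ch u" if "u < length \<gamma>" for u
  proof -
    have "\<eta> ! u < m" using assms that by (metis nth_mem)
    show ?thesis
      using chunk_shift[OF assms(4,6) inl, of k Q P C] chunk_shift_not[OF assms(5,7) inl, of k Q P C]
        vshift_ne[of "\<eta> ! u" i k n] assms(3)
      by (auto simp: T_def V_def ch_def q_def)
  qed
  have sub: "arr_subst C X P Q (i+k) (hc_dom_type \<sigma> \<tau> n \<gamma> \<eta> i) (hc_dom_var \<alpha> \<beta> \<gamma> \<eta> i)
       = concat (map ch [0..<length \<gamma>])"
    apply (subst arr_subst_zip[OF len])
    unfolding ty va zip_concat_map[OF TV] map_concat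
    apply (simp only: q_def[symmetric])
    using chq by (intro arg_cong[where f=concat] map_cong) auto
  have ws: "hc_dom_widths \<alpha> \<beta> \<gamma> \<eta> i = map length (map ch [0..<length \<gamma>])"
    by (auto simp: hc_dom_widths_def ch_def intro!: nth_equalityI)
  show ?thesis
    unfolding sub hc_dom_def
    apply (simp add: plug_concat[OF ws])
    apply (rule arg_cong[where f="farr H"])
    using assms B_nth[of _ i m X n Z]
    by (auto simp: arr_subst_def ch_def intro!: nth_equalityI)
qed


lemma cod_farr:
  assumes "length X = m - 1 + n" "i < m" "k < n" "length \<sigma> = length \<alpha>" "length \<tau> = length \<beta>"
    "\<forall>j\<in>set \<sigma>. j < n" "\<forall>j\<in>set \<tau>. j < n" "\<forall>j\<in>set \<theta>. j < m" "length \<theta> = length \<delta>"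
  shows "farr (hc_cod \<alpha> \<beta> \<delta> \<theta> i F G K)
           (arr_subst C X P Q (i+k) (hc_cod_type \<sigma> \<tau> n \<delta> \<theta> i) (hc_cod_var \<alpha> \<beta> \<delta> \<theta> i))
   = farr K (arr_subst C (take i X @ [Z] @ drop (i+n) X)
        (farr F (arr_subst C (take n (drop i X)) Q P k \<sigma> \<alpha>))
        (farr G (arr_subst C (take n (drop i X)) P Q k \<tau> \<beta>)) i \<theta> \<delta>)"
proof -
  define T where "T = (\<lambda>u. if \<theta> ! u = i then (if \<delta> ! u then map ((+) i) \<tau> else map ((+) i) \<sigma>)
                      else [vshift n i (\<theta> ! u)])"
  define V where "V = (\<lambda>u. if \<theta> ! u = i then (if \<delta> ! u then \<beta> else map Not \<alpha>) else [\<delta> ! u])"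
  define q where "q = (\<lambda>(s,v). if s = i + k then (if v then Q else P) else Id C (X ! s))"
  define ch where "ch = (\<lambda>u. if \<theta> ! u = i then (if \<delta> ! u then arr_subst C (take n (drop i X)) P Q k \<tau> \<beta>
                      else arr_subst C (take n (drop i X)) Q P k \<sigma> \<alpha>) else [Id C (X ! vshift n i (\<theta> ! u))])"
  have TV: "\<forall>u\<in>set [0..<length \<delta>]. length (T u) = length (V u)"
    using assms by (auto simp: T_def V_def)
  have ty: "hc_cod_type \<sigma> \<tau> n \<delta> \<theta> i = concat (map T [0..<length \<delta>])"
    by (simp add: hc_cod_type_def T_def)
  have va: "hc_cod_var \<alpha> \<beta> \<delta> \<theta> i = concat (map V [0..<length \<delta>])"
    by (simp add: hc_cod_var_def V_def)
  have len: "length (hc_cod_type \<sigma> \<tau> n \<delta> \<theta> i) = length (hc_cod_var \<alpha> \<beta> \<delta> \<theta> i)"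
    unfolding ty va by (rule length_concat_map_eq[OF TV])
  have inl: "i + n \<le> length X" using assms by auto
  have chq: "map q (zip (T u) (V u)) = ch u" if "u < length \<delta>" for u
  proof -
    have "\<theta> ! u < m" using assms that by (metis nth_mem)
    show ?thesis
      using chunk_shift[OF assms(5,7) inl, of k Q P C] chunk_shift_not[OF assms(4,6) inl, of k Q P C]
        vshift_ne[of "\<theta> ! u" i k n] assms(3)
      by (auto simp: T_def V_def ch_def q_def)
  qed
  have sub: "arr_subst C X P Q (i+k) (hc_cod_type \<sigma> \<tau> n \<delta> \<theta> i) (hc_cod_var \<alpha> \<beta> \<delta> \<theta> i)
       = concat (map ch [0..<length \<delta>])"
    apply (subst arr_subst_zip[OF len])
    unfolding ty va zip_concat_map[OF TV] map_concat
    apply (simp only: q_def[symmetric])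
    using chq by (intro arg_cong[where f=concat] map_cong) auto
  have ws: "hc_cod_widths \<alpha> \<beta> \<delta> \<theta> i = map length (map ch [0..<length \<delta>])"
    by (auto simp: hc_cod_widths_def ch_def intro!: nth_equalityI)
  show ?thesis
    unfolding sub hc_cod_def
    apply (simp add: plug_concat[OF ws])
    apply (rule arg_cong[where f="farr K"])
    using assms B_nth[of _ i m X n Z]
    by (auto simp: arr_subst_def ch_def intro!: nth_equalityI)
qed



lemma core:
  assumes cat: "category C" and mH: "mvfunctor C \<gamma> H" and mK: "mvfunctor C \<delta> K"
    and tr: "transformation C H \<gamma> K \<delta> \<eta> \<theta> m \<psi>"
    and di: "dinatural C H \<gamma> \<eta> K \<delta> \<theta> m \<psi> i"
    and lB: "length B = m" and oB: "set B \<subseteq> Obj C"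
    and ah: "hA \<in> Arr C" and ap: "ph \<in> Arr C" and ag: "gA \<in> Arr C"
    and c1: "Cod C hA = Dom C ph" and c2: "Cod C ph = Dom C gA"
  shows "Comp C (farr K (arr_subst C B hA gA i \<theta> \<delta>))
          (Comp C (Comp C (farr K (arr_subst C B (Id C (Dom C ph)) ph i \<theta> \<delta>))
                     (Comp C (\<psi> (B[i := Dom C ph])) (farr H (arr_subst C B ph (Id C (Dom C ph)) i \<eta> \<gamma>))))
             (farr H (arr_subst C B gA hA i \<eta> \<gamma>)))
   = Comp C (farr K (arr_subst C B (Comp C gA (Comp C ph hA)) (Id C (Cod C gA)) i \<theta> \<delta>))
       (Comp C (\<psi> (B[i := Cod C gA])) (farr H (arr_subst C B (Id C (Cod C gA)) (Comp C gA (Comp C ph hA)) i \<eta> \<gamma>)))"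
proof -
  have le: "length \<eta> = length \<gamma>" "length \<theta> = length \<delta>" "\<forall>j\<in>set \<eta>. j < length B" "\<forall>j\<in>set \<theta>. j < length B"
    using tr lB by (auto simp: transformation_def)
  have im: "i < m" using di by (simp add: dinatural_def)
  have psi: "\<psi> (B[i:=c]) \<in> Arr C" "Dom C (\<psi> (B[i:=c])) = fobj H (map (\<lambda>j. if \<eta>!j = i then c else B!(\<eta>!j)) [0..<length \<gamma>])"
     "Cod C (\<psi> (B[i:=c])) = fobj K (map (\<lambda>j. if \<theta>!j = i then c else B!(\<theta>!j)) [0..<length \<delta>])"
    if "c \<in> Obj C" for c
  proof -
    have "length (B[i:=c]) = m" "set (B[i:=c]) \<subseteq> Obj C" using lB oB that set_update_subset_insert by fastforce+
    then show "\<psi> (B[i:=c]) \<in> Arr C" "Dom C (\<psi> (B[i:=c])) = fobj H (map (\<lambda>j. if \<eta>!j = i then c else B!(\<eta>!j)) [0..<length \<gamma>])"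
     "Cod C (\<psi> (B[i:=c])) = fobj K (map (\<lambda>j. if \<theta>!j = i then c else B!(\<theta>!j)) [0..<length \<delta>])"
      using tr map_upd_eq[OF le(1,3), of i c] map_upd_eq[OF le(2,4), of i c]
      unfolding transformation_def by auto
  qed
  note sH = sub_farr[OF cat mH _ _ oB le(3) le(1)]
  note sK = sub_farr[OF cat mK _ _ oB le(4) le(2)]
  note cH = sub_comp[OF cat mH _ _ _ _ oB le(3) le(1)]
  note cK = sub_comp[OF cat mK _ _ _ _ oB le(4) le(2)]
  note ob = cdom[OF cat] ccod[OF cat] cid[OF cat] ccomp[OF cat]
  define FA where "FA = Dom C ph"
  define Y where "Y = Cod C gA"
  define \<Phi> where "\<Phi> = Comp C gA ph"
  have oFA: "FA \<in> Obj C" and oY: "Y \<in> Obj C" using ob ap ag by (auto simp: FA_def Y_def)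
  have aP: "\<Phi> \<in> Arr C" "Dom C \<Phi> = FA" "Cod C \<Phi> = Y" using ob ap ag c2 by (auto simp: \<Phi>_def FA_def Y_def)
  have c1': "Cod C hA = FA" using c1 by (simp add: FA_def)
  note ty = sH sK psi ob aP ah ap ag c1' oFA oY
  note ty2 = ty c2 FA_def[symmetric] Y_def[symmetric]

  let ?K0 = "farr K (arr_subst C B hA gA i \<theta> \<delta>)"
  let ?K1 = "farr K (arr_subst C B (Id C FA) ph i \<theta> \<delta>)"
  let ?P = "\<psi> (B[i := FA])"
  let ?H1 = "farr H (arr_subst C B ph (Id C FA) i \<eta> \<gamma>)"
  let ?H0 = "farr H (arr_subst C B gA hA i \<eta> \<gamma>)"
  have e1: "Comp C ?K0 ?K1 = farr K (arr_subst C B hA \<Phi> i \<theta> \<delta>)"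
    using cK[of hA gA "Id C FA" ph i] ty c2 cidl[OF cat ah] by (simp add: \<Phi>_def FA_def)
  have e2: "Comp C ?H1 ?H0 = farr H (arr_subst C B \<Phi> hA i \<eta> \<gamma>)"
    using cH[of ph "Id C FA" gA hA i] ty c2 cidl[OF cat ah] by (simp add: \<Phi>_def FA_def)
  let ?Kh = "farr K (arr_subst C B hA (Id C Y) i \<theta> \<delta>)"
  let ?KP = "farr K (arr_subst C B (Id C FA) \<Phi> i \<theta> \<delta>)"
  let ?HP = "farr H (arr_subst C B \<Phi> (Id C FA) i \<eta> \<gamma>)"
  let ?Hh = "farr H (arr_subst C B (Id C Y) hA i \<eta> \<gamma>)"
  let ?K' = "farr K (arr_subst C B \<Phi> (Id C Y) i \<theta> \<delta>)"
  let ?P' = "\<psi> (B[i := Y])"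
  let ?H' = "farr H (arr_subst C B (Id C Y) \<Phi> i \<eta> \<gamma>)"
  have e3: "farr K (arr_subst C B hA \<Phi> i \<theta> \<delta>) = Comp C ?Kh ?KP"
    using cK[of hA "Id C Y" "Id C FA" \<Phi> i] ty cidl[OF cat ah] cidl[OF cat aP(1)] by simp
  have e4: "farr H (arr_subst C B \<Phi> hA i \<eta> \<gamma>) = Comp C ?HP ?Hh"
    using cH[of \<Phi> "Id C FA" "Id C Y" hA i] ty cidl[OF cat ah] cidl[OF cat aP(1)] by simp
  have dn: "Comp C ?KP (Comp C ?P ?HP) = Comp C ?K' (Comp C ?P' ?H')"
    using di aP lB oB unfolding dinatural_def Let_def by auto
  have e6: "Comp C ?Kh ?K' = farr K (arr_subst C B (Comp C \<Phi> hA) (Id C Y) i \<theta> \<delta>)"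
    using cK[of hA "Id C Y" \<Phi> "Id C Y" i] ty cidid[OF cat oY] by simp
  have e7: "Comp C ?H' ?Hh = farr H (arr_subst C B (Id C Y) (Comp C \<Phi> hA) i \<eta> \<gamma>)"
    using cH[of "Id C Y" \<Phi> "Id C Y" hA i] ty cidid[OF cat oY] by simp
  have e8: "Comp C \<Phi> hA = Comp C gA (Comp C ph hA)"
    unfolding \<Phi>_def using cassoc[OF cat ah ap ag c1 c2] by simp
  have t1: "?H0 \<in> Arr C" "?H1 \<in> Arr C" "?P \<in> Arr C" "?K1 \<in> Arr C" "?K0 \<in> Arr C" by (simp_all add: ty)
  have t2: "Cod C ?H0 = Dom C ?H1" by (simp add: ty2 cong: if_cong)
  have t3: "Cod C ?H1 = Dom C ?P" by (simp add: ty2 cong: if_cong)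
  have t4: "Cod C ?P = Dom C ?K1" by (simp add: ty2 cong: if_cong)
  have t5: "Cod C ?K1 = Dom C ?K0" by (simp add: ty2 cong: if_cong)
  have "Comp C ?K0 (Comp C (Comp C ?K1 (Comp C ?P ?H1)) ?H0) = Comp C (Comp C ?K0 ?K1) (Comp C ?P (Comp C ?H1 ?H0))"
    by (simp add: cassoc[OF cat] ty2 cong: if_cong)
  also have "\<dots> = Comp C (Comp C ?Kh ?KP) (Comp C ?P (Comp C ?HP ?Hh))"
    unfolding e1 e2 e3 e4 ..
  also have "\<dots> = Comp C ?Kh (Comp C (Comp C ?KP (Comp C ?P ?HP)) ?Hh)"
    by (simp add: cassoc[OF cat] ty2 cong: if_cong)
  also have "\<dots> = Comp C ?Kh (Comp C (Comp C ?K' (Comp C ?P' ?H')) ?Hh)"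
    unfolding dn ..
  also have "\<dots> = Comp C (Comp C ?Kh ?K') (Comp C ?P' (Comp C ?H' ?Hh))"
    by (simp add: cassoc[OF cat] ty2 cong: if_cong)
  also have "\<dots> = Comp C (farr K (arr_subst C B (Comp C gA (Comp C ph hA)) (Id C Y) i \<theta> \<delta>))
       (Comp C ?P' (farr H (arr_subst C B (Id C Y) (Comp C gA (Comp C ph hA)) i \<eta> \<gamma>)))"
    unfolding e6 e7 e8 ..
  finally show ?thesis unfolding FA_def Y_def .
qed

lemma take_drop_upd:
  assumes "i + n \<le> length X" "k < n"
  shows "take n (drop i (X[i+k := a])) = (take n (drop i X))[k := a]"
    "take i (X[i+k := a]) = take i X" "drop (i+n) (X[i+k := a]) = drop (i+n) X"
  using assms by (auto intro!: nth_equalityI simp: nth_list_update)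

lemma B_upd: "i \<le> length X \<Longrightarrow> (take i X @ [Z] @ drop (i+n) X)[i := W] = take i X @ [W] @ drop (i+n) X"
  by (simp add: list_update_append)

lemma arr_subst_upd_i: "arr_subst C (B[i:=c]) x y i \<eta> \<gamma> = arr_subst C B x y i \<eta> \<gamma>"
  by (auto simp: arr_subst_def nth_list_update intro!: nth_equalityI)

theorem mainTheorem10:
  fixes C :: "('o, 'a) cat"
    and F G H K :: "('o, 'a) mvfun"
    and \<alpha> \<beta> \<gamma> \<delta> :: "bool list"
    and \<sigma> \<tau> \<eta> \<theta> :: "nat list"
    and n m i k :: nat
    and \<phi> \<psi> :: "'o list \<Rightarrow> 'a"
  assumes "category C"
    and "mvfunctor C \<alpha> F" and "mvfunctor C \<beta> G"
    and "mvfunctor C \<gamma> H" and "mvfunctor C \<delta> K"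
    and "transformation C F \<alpha> G \<beta> \<sigma> \<tau> n \<phi>"
    and "transformation C H \<gamma> K \<delta> \<eta> \<theta> m \<psi>"
    and "dinatural C F \<alpha> \<sigma> G \<beta> \<tau> n \<phi> k"
    and "dinatural C H \<gamma> \<eta> K \<delta> \<theta> m \<psi> i"
  shows "dinatural C
           (hc_dom \<alpha> \<beta> \<gamma> \<eta> i F G H) (hc_dom_var \<alpha> \<beta> \<gamma> \<eta> i) (hc_dom_type \<sigma> \<tau> n \<gamma> \<eta> i)
           (hc_cod \<alpha> \<beta> \<delta> \<theta> i F G K) (hc_cod_var \<alpha> \<beta> \<delta> \<theta> i) (hc_cod_type \<sigma> \<tau> n \<delta> \<theta> i)
           (m - 1 + n) (hc_comp C \<sigma> n \<gamma> \<eta> \<delta> \<theta> i F H K \<phi> \<psi>) (i + k)"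
  proof -
  note cat = assms(1)
  have k: "k < n" using assms(8) by (simp add: dinatural_def)
  have im: "i < m" using assms(9) by (simp add: dinatural_def)
  have lF: "length \<sigma> = length \<alpha>" "length \<tau> = length \<beta>" "\<forall>j\<in>set \<sigma>. j < n" "\<forall>j\<in>set \<tau>. j < n"
    using assms(6) by (auto simp: transformation_def)
  have lH: "length \<eta> = length \<gamma>" "length \<theta> = length \<delta>" "\<forall>j\<in>set \<eta>. j < m" "\<forall>j\<in>set \<theta>. j < m"
    using assms(7) by (auto simp: transformation_def)
  show ?thesis unfolding dinatural_def Let_def
  proof (intro conjI allI impI)
    show "i + k < m - 1 + n" using k im by simp
    fix X f assume lX: "length X = m - 1 + n" and oX: "set X \<subseteq> Obj C" and af: "f \<in> Arr C"
    define a where "a = Dom C f"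
    define b where "b = Cod C f"
    have oa: "a \<in> Obj C" and ob: "b \<in> Obj C" using cdom[OF cat af] ccod[OF cat af] by (simp_all add: a_def b_def)
    define Ain where "Ain = take n (drop i X)"
    define B0 where "B0 = take i X @ [a] @ drop (i+n) X"
    have inl: "i + n \<le> length X" using lX im by simp
    have lA: "length Ain = n" using inl by (simp add: Ain_def)
    have oA: "set Ain \<subseteq> Obj C" using oX by (simp add: Ain_def) (meson in_set_dropD in_set_takeD subsetD subsetI)
    have lB: "length B0 = m" using inl lX im by (simp add: B0_def)
    have oB: "set B0 \<subseteq> Obj C" using oX oa by (auto simp: B0_def dest: in_set_dropD in_set_takeD)
    have lsA: "\<forall>j\<in>set \<sigma>. j < length Ain" "\<forall>j\<in>set \<tau>. j < length Ain" using lF lA by auto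
    have hcu: "hc_comp C \<sigma> n \<gamma> \<eta> \<delta> \<theta> i F H K \<phi> \<psi> (X[i+k := c]) =
       Comp C (farr K (arr_subst C B0 (Id C (Dom C (\<phi> (Ain[k:=c])))) (\<phi> (Ain[k:=c])) i \<theta> \<delta>))
           (Comp C (\<psi> (B0[i := Dom C (\<phi> (Ain[k:=c]))])) (farr H (arr_subst C B0 (\<phi> (Ain[k:=c])) (Id C (Dom C (\<phi> (Ain[k:=c])))) i \<eta> \<gamma>)))"
      if "c \<in> Obj C" for c
    proof -
      have "length (Ain[k:=c]) = n" "set (Ain[k:=c]) \<subseteq> Obj C"
        using lA oA that set_update_subset_insert by fastforce+
      then have d: "fobj F (map ((!) (Ain[k:=c])) \<sigma>) = Dom C (\<phi> (Ain[k:=c]))"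
        using assms(6) by (simp add: transformation_def)
      have e: "take i X @ Dom C (\<phi> (Ain[k:=c])) # drop (i+n) X = B0[i := Dom C (\<phi> (Ain[k:=c]))]"
        using B_upd[of i X a n] inl by (simp add: B0_def)
      show ?thesis
        using take_drop_upd[OF inl k, of c]
        by (simp add: hc_comp_def Let_def Ain_def[symmetric] d e arr_subst_upd_i)
    qed
    note sF = sub_farr[OF cat assms(2) _ _ oA lsA(1) lF(1)]
    note sG = sub_farr[OF cat assms(3) _ _ oA lsA(2) lF(2)]
    have ph: "\<phi> (Ain[k:=c]) \<in> Arr C" "Dom C (\<phi> (Ain[k:=c])) = fobj F (map (\<lambda>j. if \<sigma>!j = k then c else Ain!(\<sigma>!j)) [0..<length \<alpha>])"
       "Cod C (\<phi> (Ain[k:=c])) = fobj G (map (\<lambda>j. if \<tau>!j = k then c else Ain!(\<tau>!j)) [0..<length \<beta>])"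
      if "c \<in> Obj C" for c
    proof -
      have "length (Ain[k:=c]) = n" "set (Ain[k:=c]) \<subseteq> Obj C"
        using lA oA that set_update_subset_insert by fastforce+
      then show "\<phi> (Ain[k:=c]) \<in> Arr C" "Dom C (\<phi> (Ain[k:=c])) = fobj F (map (\<lambda>j. if \<sigma>!j = k then c else Ain!(\<sigma>!j)) [0..<length \<alpha>])"
       "Cod C (\<phi> (Ain[k:=c])) = fobj G (map (\<lambda>j. if \<tau>!j = k then c else Ain!(\<tau>!j)) [0..<length \<beta>])"
        using assms(6) map_upd_eq[OF lF(1) lsA(1), of k c] map_upd_eq[OF lF(2) lsA(2), of k c]
        by (auto simp: transformation_def)
    qed
    note ty = sF sG ph cid[OF cat] oa ob af a_def[symmetric] b_def[symmetric]
    define hA where "hA = farr F (arr_subst C Ain f (Id C a) k \<sigma> \<alpha>)"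
    define gA where "gA = farr G (arr_subst C Ain (Id C a) f k \<tau> \<beta>)"
    define hB where "hB = farr F (arr_subst C Ain (Id C b) f k \<sigma> \<alpha>)"
    define gB where "gB = farr G (arr_subst C Ain f (Id C b) k \<tau> \<beta>)"
    have tA: "hA \<in> Arr C" "gA \<in> Arr C" "Cod C hA = Dom C (\<phi> (Ain[k:=a]))" "Cod C (\<phi> (Ain[k:=a])) = Dom C gA"
      unfolding hA_def gA_def by (simp_all add: ty cong: if_cong)
    have tB: "hB \<in> Arr C" "gB \<in> Arr C" "Cod C hB = Dom C (\<phi> (Ain[k:=b]))" "Cod C (\<phi> (Ain[k:=b])) = Dom C gB"
      unfolding hB_def gB_def by (simp_all add: ty cong: if_cong)
    have dphi: "Comp C gA (Comp C (\<phi> (Ain[k:=a])) hA) = Comp C gB (Comp C (\<phi> (Ain[k:=b])) hB)"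
      using assms(8) lA oA af unfolding dinatural_def Let_def hA_def gA_def hB_def gB_def a_def b_def by blast
    have Ya: "Cod C gA = Cod C (Comp C gA (Comp C (\<phi> (Ain[k:=a])) hA))"
      using tA ph(1)[OF oa] ccomp[OF cat] by simp
    have Yb: "Cod C gB = Cod C (Comp C gB (Comp C (\<phi> (Ain[k:=b])) hB))"
      using tB ph(1)[OF ob] ccomp[OF cat] by simp
    note cA = core[OF cat assms(4,5,7,9) lB oB tA(1) ph(1)[OF oa] tA(2) tA(3,4)]
    note cB = core[OF cat assms(4,5,7,9) lB oB tB(1) ph(1)[OF ob] tB(2) tB(3,4)]
    note DA = dom_farr[OF lX im k lF lH(3,1), where C=C and P=f and Q="Id C a" and F=F and G=G and H=H and Z=a]
    note CA = cod_farr[OF lX im k lF lH(4,2), where C=C and P="Id C a" and Q=f and F=F and G=G and K=K and Z=a]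
    note DB = dom_farr[OF lX im k lF lH(3,1), where C=C and P="Id C b" and Q=f and F=F and G=G and H=H and Z=a]
    note CB = cod_farr[OF lX im k lF lH(4,2), where C=C and P=f and Q="Id C b" and F=F and G=G and K=K and Z=a]
    show "Comp C (farr (hc_cod \<alpha> \<beta> \<delta> \<theta> i F G K)
            (arr_subst C X (Id C (Dom C f)) f (i + k) (hc_cod_type \<sigma> \<tau> n \<delta> \<theta> i) (hc_cod_var \<alpha> \<beta> \<delta> \<theta> i)))
        (Comp C (hc_comp C \<sigma> n \<gamma> \<eta> \<delta> \<theta> i F H K \<phi> \<psi> (X[i + k := Dom C f]))
          (farr (hc_dom \<alpha> \<beta> \<gamma> \<eta> i F G H)
            (arr_subst C X f (Id C (Dom C f)) (i + k) (hc_dom_type \<sigma> \<tau> n \<gamma> \<eta> i) (hc_dom_var \<alpha> \<beta> \<gamma> \<eta> i)))) =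
       Comp C (farr (hc_cod \<alpha> \<beta> \<delta> \<theta> i F G K)
            (arr_subst C X f (Id C (Cod C f)) (i + k) (hc_cod_type \<sigma> \<tau> n \<delta> \<theta> i) (hc_cod_var \<alpha> \<beta> \<delta> \<theta> i)))
        (Comp C (hc_comp C \<sigma> n \<gamma> \<eta> \<delta> \<theta> i F H K \<phi> \<psi> (X[i + k := Cod C f]))
          (farr (hc_dom \<alpha> \<beta> \<gamma> \<eta> i F G H)
            (arr_subst C X (Id C (Cod C f)) f (i + k) (hc_dom_type \<sigma> \<tau> n \<gamma> \<eta> i) (hc_dom_var \<alpha> \<beta> \<gamma> \<eta> i))))"
      unfolding a_def[symmetric] b_def[symmetric] DA CA DB CB hcu[OF oa] hcu[OF ob]
      unfolding Ain_def[symmetric] B0_def[symmetric] hA_def[symmetric] gA_def[symmetric] hB_def[symmetric] gB_def[symmetric]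
      unfolding cA cB Ya Yb dphi ..
  qed
qed

end
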